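(* A commuting pair $(S,P)$ of operators on a Hilbert space is a $\Gamma$-contraction if and only if $(0,S,P)$ is a $\mathbb P$-contraction.
   Context: The pentablock is $\mathbb P=\{(a_{21},\operatorname{tr}A_0,\det A_0): A_0=[a_{ij}]\in M_2(\mathbb C),\ \|A_0\|<1\}\subset\mathbb C^3$ and $\Gamma=\{(z_1+z_2,z_1z_2):z_1,z_2\in\overline{\mathbb D}\}$. A compact $K$ is a spectral set for a commuting tuple if the Taylor joint spectrum lies in $K$ and $\|f(\underline T)\|\le\sup_K|f|$ for every rational $f$ with no poles in $K$. A $\mathbb P$-contraction (resp. $\Gamma$-contraction) is a commuting triple (resp. pair) having $\overline{\mathbb P}$ (resp. $\Gamma$) as a spectral set. *)

theory Defs
  imports "HOL-Analysis.Analysis"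
begin

text \<open>A complex Hilbert space, presented as a real Hilbert space (complete real inner
product space) equipped with a compatible complex scalar multiplication; the complex
inner product is then recovered from the real one and induces the same norm.\<close>

class complex_hilbert = real_inner + complete_space +
  fixes scaleC :: "complex \<Rightarrow> 'a \<Rightarrow> 'a"
  assumes scaleC_add_right: "scaleC a (x + y) = scaleC a x + scaleC a y"
    and scaleC_add_left: "scaleC (a + b) x = scaleC a x + scaleC b x"
    and scaleC_scaleC: "scaleC a (scaleC b x) = scaleC (a * b) x"
    and scaleC_one: "scaleC 1 x = x"
    and scaleC_of_real: "scaleC (complex_of_real r) x = scaleR r x"
    and inner_scaleC_ii: "inner (scaleC \<i> x) (scaleC \<i> y) = inner x y"

text \<open>Non-vacuity: the complex numbers form such a space.\<close>
instantiation complex :: complex_hilbert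
begin
definition scaleC_complex_def: "scaleC (a::complex) (x::complex) = a * x"
instance
  by standard (auto simp: scaleC_complex_def algebra_simps scaleR_conv_of_real
                          inner_complex_def)
end

definition bop :: "('a::complex_hilbert \<Rightarrow> 'a) \<Rightarrow> bool" where
  "bop T \<longleftrightarrow> bounded_linear T \<and> (\<forall>c x. T (scaleC c x) = scaleC c (T x))"

text \<open>Koszul complex of a pair (A,B):
  0 \<rightarrow> H \<rightarrow> H\<oplus>H \<rightarrow> H \<rightarrow> 0,  x \<mapsto> (Ax,Bx),  (x,y) \<mapsto> Bx - Ay.\<close>
definition koszul_exact2 :: "('a::complex_hilbert \<Rightarrow> 'a) \<Rightarrow> ('a \<Rightarrow> 'a) \<Rightarrow> bool" where
  "koszul_exact2 A B \<longleftrightarrow>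
     (\<forall>x. A x = 0 \<and> B x = 0 \<longrightarrow> x = 0) \<and>
     (\<forall>x y. B x - A y = 0 \<longrightarrow> (\<exists>z. x = A z \<and> y = B z)) \<and>
     (\<forall>w. \<exists>x y. w = B x - A y)"

text \<open>Koszul complex of a triple (A,B,C):
  0 \<rightarrow> H \<rightarrow> H^3 \<rightarrow> H^3 \<rightarrow> H \<rightarrow> 0.\<close>
definition koszul_exact3 ::
  "('a::complex_hilbert \<Rightarrow> 'a) \<Rightarrow> ('a \<Rightarrow> 'a) \<Rightarrow> ('a \<Rightarrow> 'a) \<Rightarrow> bool" where
  "koszul_exact3 A B C \<longleftrightarrow>
     (\<forall>x. A x = 0 \<and> B x = 0 \<and> C x = 0 \<longrightarrow> x = 0) \<and>
     (\<forall>x1 x2 x3. B x3 - C x2 = 0 \<and> C x1 - A x3 = 0 \<and> A x2 - B x1 = 0 \<longrightarrow>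
         (\<exists>z. x1 = A z \<and> x2 = B z \<and> x3 = C z)) \<and>
     (\<forall>y1 y2 y3. A y1 + B y2 + C y3 = 0 \<longrightarrow>
         (\<exists>x1 x2 x3. y1 = B x3 - C x2 \<and> y2 = C x1 - A x3 \<and> y3 = A x2 - B x1)) \<and>
     (\<forall>w. \<exists>y1 y2 y3. w = A y1 + B y2 + C y3)"

definition taylor_spectrum2 ::
  "('a::complex_hilbert \<Rightarrow> 'a) \<Rightarrow> ('a \<Rightarrow> 'a) \<Rightarrow> (complex \<times> complex) set" where
  "taylor_spectrum2 T1 T2 =
     {(l1, l2). \<not> koszul_exact2 (\<lambda>x. T1 x - scaleC l1 x) (\<lambda>x. T2 x - scaleC l2 x)}"

definition taylor_spectrum3 ::
  "('a::complex_hilbert \<Rightarrow> 'a) \<Rightarrow> ('a \<Rightarrow> 'a) \<Rightarrow> ('a \<Rightarrow> 'a) \<Rightarrow> (complex \<times> complex \<times> complex) set" where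
  "taylor_spectrum3 T1 T2 T3 =
     {(l1, l2, l3). \<not> koszul_exact3 (\<lambda>x. T1 x - scaleC l1 x) (\<lambda>x. T2 x - scaleC l2 x)
                                      (\<lambda>x. T3 x - scaleC l3 x)}"

definition mpoly_coeffs :: "('i \<Rightarrow> complex) \<Rightarrow> bool" where
  "mpoly_coeffs c \<longleftrightarrow> finite {m. c m \<noteq> 0}"

definition peval2 :: "(nat \<times> nat \<Rightarrow> complex) \<Rightarrow> complex \<times> complex \<Rightarrow> complex" where
  "peval2 c z = (\<Sum>m\<in>{m. c m \<noteq> 0}. c m * fst z ^ fst m * snd z ^ snd m)"

definition peval3 :: "(nat \<times> nat \<times> nat \<Rightarrow> complex) \<Rightarrow> complex \<times> complex \<times> complex \<Rightarrow> complex" where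
  "peval3 c z = (\<Sum>m\<in>{m. c m \<noteq> 0}.
      c m * fst z ^ fst m * fst (snd z) ^ fst (snd m) * snd (snd z) ^ snd (snd m))"

definition opeval2 ::
  "(nat \<times> nat \<Rightarrow> complex) \<Rightarrow> ('a::complex_hilbert \<Rightarrow> 'a) \<Rightarrow> ('a \<Rightarrow> 'a) \<Rightarrow> 'a \<Rightarrow> 'a" where
  "opeval2 c T1 T2 = (\<lambda>x. \<Sum>m\<in>{m. c m \<noteq> 0}. scaleC (c m) ((T1 ^^ fst m) ((T2 ^^ snd m) x)))"

definition opeval3 ::
  "(nat \<times> nat \<times> nat \<Rightarrow> complex) \<Rightarrow> ('a::complex_hilbert \<Rightarrow> 'a) \<Rightarrow> ('a \<Rightarrow> 'a) \<Rightarrow> ('a \<Rightarrow> 'a)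
     \<Rightarrow> 'a \<Rightarrow> 'a" where
  "opeval3 c T1 T2 T3 = (\<lambda>x. \<Sum>m\<in>{m. c m \<noteq> 0}.
      scaleC (c m) ((T1 ^^ fst m) ((T2 ^^ fst (snd m)) ((T3 ^^ snd (snd m)) x))))"

definition spectral_set2 ::
  "(complex \<times> complex) set \<Rightarrow> ('a::complex_hilbert \<Rightarrow> 'a) \<Rightarrow> ('a \<Rightarrow> 'a) \<Rightarrow> bool" where
  "spectral_set2 K T1 T2 \<longleftrightarrow>
     taylor_spectrum2 T1 T2 \<subseteq> K \<and>
     (\<forall>p q. mpoly_coeffs p \<and> mpoly_coeffs q \<and> (\<forall>z\<in>K. peval2 q z \<noteq> 0) \<longrightarrow>
        onorm (\<lambda>x. opeval2 p T1 T2 (inv (opeval2 q T1 T2) x))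
          \<le> (SUP z\<in>K. cmod (peval2 p z / peval2 q z)))"

definition spectral_set3 ::
  "(complex \<times> complex \<times> complex) set \<Rightarrow> ('a::complex_hilbert \<Rightarrow> 'a) \<Rightarrow> ('a \<Rightarrow> 'a)
     \<Rightarrow> ('a \<Rightarrow> 'a) \<Rightarrow> bool" where
  "spectral_set3 K T1 T2 T3 \<longleftrightarrow>
     taylor_spectrum3 T1 T2 T3 \<subseteq> K \<and>
     (\<forall>p q. mpoly_coeffs p \<and> mpoly_coeffs q \<and> (\<forall>z\<in>K. peval3 q z \<noteq> 0) \<longrightarrow>
        onorm (\<lambda>x. opeval3 p T1 T2 T3 (inv (opeval3 q T1 T2 T3) x))
          \<le> (SUP z\<in>K. cmod (peval3 p z / peval3 q z)))"

definition Gamma :: "(complex \<times> complex) set" where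
  "Gamma = {(z1 + z2, z1 * z2) | z1 z2. cmod z1 \<le> 1 \<and> cmod z2 \<le> 1}"

definition pentablock :: "(complex \<times> complex \<times> complex) set" where
  "pentablock = {(A $ 2 $ 1, A $ 1 $ 1 + A $ 2 $ 2, det A) | A :: complex^2^2.
                   onorm (\<lambda>x. A *v x) < 1}"

definition gamma_contraction :: "('a::complex_hilbert \<Rightarrow> 'a) \<Rightarrow> ('a \<Rightarrow> 'a) \<Rightarrow> bool" where
  "gamma_contraction S P \<longleftrightarrow>
     bop S \<and> bop P \<and> S \<circ> P = P \<circ> S \<and> spectral_set2 Gamma S P"

definition penta_contraction ::
  "('a::complex_hilbert \<Rightarrow> 'a) \<Rightarrow> ('a \<Rightarrow> 'a) \<Rightarrow> ('a \<Rightarrow> 'a) \<Rightarrow> bool" where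
  "penta_contraction A S P \<longleftrightarrow>
     bop A \<and> bop S \<and> bop P \<and> A \<circ> S = S \<circ> A \<and> A \<circ> P = P \<circ> A \<and> S \<circ> P = P \<circ> S \<and>
     spectral_set3 (closure pentablock) A S P"

end

theory Submission
  imports Defs
begin

lemma scaleC_zero_right[simp]: "scaleC c (0::'a::complex_hilbert) = 0"
proof -
  have "scaleC c (0::'a) = scaleC c 0 + scaleC c 0" using scaleC_add_right[of c 0 0] by simp
  thus ?thesis by simp
qed

lemma scaleC_zero_left[simp]: "scaleC 0 (x::'a::complex_hilbert) = 0"
  using scaleC_of_real[of 0 x] by simp

lemma scaleC_minus_right: "scaleC c (- x::'a::complex_hilbert) = - scaleC c x"
proof -
  have "scaleC c (- x) + scaleC c x = 0" using scaleC_add_right[of c "-x" x] by simp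
  thus ?thesis by (simp add: eq_neg_iff_add_eq_0)
qed

lemma scaleC_diff_right: "scaleC c (x - y::'a::complex_hilbert) = scaleC c x - scaleC c y"
  using scaleC_add_right[of c x "-y"] scaleC_minus_right[of c y] by simp

lemma linear_scaleC: "linear (scaleC c :: 'a::complex_hilbert \<Rightarrow> 'a)"
proof (rule linearI)
  fix x y :: 'a show "scaleC c (x + y) = scaleC c x + scaleC c y" by (rule scaleC_add_right)
next
  fix r :: real and x :: 'a
  have "scaleC c (r *\<^sub>R x) = scaleC c (scaleC (complex_of_real r) x)" by (simp add: scaleC_of_real)
  also have "\<dots> = scaleC (complex_of_real r) (scaleC c x)" by (simp add: scaleC_scaleC mult.commute)
  finally show "scaleC c (r *\<^sub>R x) = r *\<^sub>R scaleC c x" by (simp add: scaleC_of_real)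
qed

lemma bop_linear: "bop T \<Longrightarrow> linear T"
  unfolding bop_def using bounded_linear.linear by blast

lemma shift_linear:
  assumes "bop T" shows "linear (\<lambda>x. T x - scaleC l x)"
  using linear_compose_sub[OF bop_linear[OF assms] linear_scaleC] by simp

lemma shift_scaleC:
  assumes "bop T" shows "T (scaleC c x) - scaleC l (scaleC c x) = scaleC c (T x - scaleC l x)"
  using assms unfolding bop_def by (simp add: scaleC_scaleC scaleC_diff_right mult.commute)

lemma shift_comm:
  assumes "bop S" "bop P" "S \<circ> P = P \<circ> S"
  shows "S (P x - scaleC b x) - scaleC a (P x - scaleC b x)
       = P (S x - scaleC a x) - scaleC b (S x - scaleC a x)"
proof -
  have lS: "linear S" and lP: "linear P" using assms bop_linear by auto
  have sS: "S (scaleC b x) = scaleC b (S x)" and sP: "P (scaleC a x) = scaleC a (P x)"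
    using assms unfolding bop_def by auto
  have c: "S (P x) = P (S x)" using assms(3) by (metis comp_apply)
  have L: "S (P x - scaleC b x) - scaleC a (P x - scaleC b x)
        = S (P x) - scaleC b (S x) - scaleC a (P x) + scaleC (a*b) x"
    by (simp add: linear_diff[OF lS] sS scaleC_diff_right scaleC_scaleC)
  have R: "P (S x - scaleC a x) - scaleC b (S x - scaleC a x)
        = P (S x) - scaleC a (P x) - scaleC b (S x) + scaleC (b*a) x"
    by (simp add: linear_diff[OF lP] sP scaleC_diff_right scaleC_scaleC)
  show ?thesis unfolding L R c by (simp add: mult.commute)

qed

lemma k2D:
  assumes "koszul_exact2 B C"
  shows k2a: "B x = 0 \<Longrightarrow> C x = 0 \<Longrightarrow> x = 0"
    and k2b: "C x - B y = 0 \<Longrightarrow> \<exists>z. x = B z \<and> y = C z"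
    and k2c: "\<exists>x y. w = C x - B y"
  using assms unfolding koszul_exact2_def by blast+

lemma k3D:
  assumes "koszul_exact3 A B C"
  shows k3a: "A x = 0 \<Longrightarrow> B x = 0 \<Longrightarrow> C x = 0 \<Longrightarrow> x = 0"
    and k3b: "B x3 - C x2 = 0 \<Longrightarrow> C x1 - A x3 = 0 \<Longrightarrow> A x2 - B x1 = 0 \<Longrightarrow>
         \<exists>z. x1 = A z \<and> x2 = B z \<and> x3 = C z"
    and k3d: "\<exists>y1 y2 y3. w = A y1 + B y2 + C y3"
  using assms unfolding koszul_exact3_def by blast+

lemma koszul2_to_3:
  assumes lB: "linear B" and lC: "linear C" and ex: "koszul_exact2 B C"
  shows "koszul_exact3 (\<lambda>_. 0) B C"
  unfolding koszul_exact3_def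
proof (intro conjI allI impI)
  fix x assume "0 = 0 \<and> B x = 0 \<and> C x = 0" thus "x = 0" using k2a[OF ex] by blast
next
  fix x1 x2 x3 assume h: "B x3 - C x2 = 0 \<and> C x1 - 0 = 0 \<and> 0 - B x1 = 0"
  have x1: "x1 = 0" using h k2a[OF ex, of x1] by simp
  have "C x2 - B x3 = 0" using h by simp
  then obtain z where "x2 = B z \<and> x3 = C z" using k2b[OF ex] by blast
  with x1 show "\<exists>z. x1 = 0 \<and> x2 = B z \<and> x3 = C z" by blast
next
  fix y1 y2 y3 assume h: "0 + B y2 + C y3 = 0"
  have "C y3 - B (- y2) = 0" using h by (simp add: linear_neg[OF lB] add.commute)
  then obtain z where z: "y3 = B z \<and> - y2 = C z" using k2b[OF ex] by blast
  obtain u v where uv: "y1 = C u - B v" using k2c[OF ex] by blast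
  show "\<exists>x1 x2 x3. y1 = B x3 - C x2 \<and> y2 = C x1 - 0 \<and> y3 = 0 - B x1"
    apply (rule exI[of _ "- z"], rule exI[of _ "- u"], rule exI[of _ "- v"])
    using z uv minus_minus[of y2] by (simp add: linear_neg[OF lB] linear_neg[OF lC])
next
  fix w obtain u v where wd: "w = C u - B v" using k2c[OF ex] by blast
  show "\<exists>y1 y2 y3. w = 0 + B y2 + C y3"
  proof (intro exI)
    show "w = 0 + B (- v) + C u" using wd by (simp add: linear_neg[OF lB])
  qed
qed

lemma koszul3_to_2:
  assumes lB: "linear B" and lC: "linear C" and ex: "koszul_exact3 (\<lambda>_. 0) B C"
  shows "koszul_exact2 B C"
  unfolding koszul_exact2_def
proof (intro conjI allI impI)
  fix x assume "B x = 0 \<and> C x = 0" thus "x = 0" using k3a[OF ex, of x] by simp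
next
  fix x y assume h: "C x - B y = 0"
  have "B y - C x = 0" using h by simp
  moreover have "C 0 - 0 = 0" "0 - B 0 = 0" by (simp_all add: linear_0[OF lB] linear_0[OF lC])
  ultimately obtain z where "0 = (0::'a) \<and> x = B z \<and> y = C z"
    using k3b[OF ex, of y x 0] by blast
  thus "\<exists>z. x = B z \<and> y = C z" by blast
next
  fix w obtain y1 y2 y3 where wd: "w = 0 + B y2 + C y3" using k3d[OF ex, of w] by blast
  show "\<exists>x y. w = C x - B y"
    apply (rule exI[of _ y3], rule exI[of _ "- y2"])
    using wd by (simp add: linear_neg[OF lB] add.commute)
qed

lemma koszul3_invertible:
  assumes lB: "linear B" and lC: "linear C" and lAi: "linear Ai"
    and inv1: "\<And>x. A (Ai x) = x" and inv2: "\<And>x. Ai (A x) = x"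
    and cB: "\<And>x. B (Ai x) = Ai (B x)" and cC: "\<And>x. C (Ai x) = Ai (C x)"
  shows "koszul_exact3 A B C"
  unfolding koszul_exact3_def
proof (intro conjI allI impI)
  fix x assume "A x = 0 \<and> B x = 0 \<and> C x = 0"
  thus "x = 0" using inv2[of x] linear_0[OF lAi] by simp
next
  fix x1 x2 x3 assume h: "B x3 - C x2 = 0 \<and> C x1 - A x3 = 0 \<and> A x2 - B x1 = 0"
  have "x2 = B (Ai x1)" using h inv2[of x2] cB[of x1] by simp
  moreover have "x3 = C (Ai x1)" using h inv2[of x3] cC[of x1] by simp
  ultimately show "\<exists>z. x1 = A z \<and> x2 = B z \<and> x3 = C z" using inv1[of x1] by metis
next
  fix y1 y2 y3 assume h: "A y1 + B y2 + C y3 = 0"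
  have "B (Ai (- y2)) - C (Ai y3) = Ai (- (B y2 + C y3))"
    by (simp add: cB cC linear_neg[OF lB] linear_neg[OF lAi] linear_add[OF lAi] linear_diff[OF lAi])
  also have "- (B y2 + C y3) = A y1" using h by (metis add.assoc add.commute neg_eq_iff_add_eq_0)
  finally have e1: "y1 = B (Ai (- y2)) - C (Ai y3)" using inv2 by simp
  show "\<exists>x1 x2 x3. y1 = B x3 - C x2 \<and> y2 = C x1 - A x3 \<and> y3 = A x2 - B x1"
    apply (rule exI[of _ 0], rule exI[of _ "Ai y3"], rule exI[of _ "Ai (- y2)"])
    using e1 by (simp add: inv1 linear_0[OF lB] linear_0[OF lC])
next
  fix w show "\<exists>y1 y2 y3. w = A y1 + B y2 + C y3"
    by (rule exI[of _ "Ai w"], rule exI[of _ 0], rule exI[of _ 0]) (simp add: inv1 linear_0[OF lB] linear_0[OF lC])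
qed

section \<open>Restriction and lifting of polynomials\<close>

definition restr :: "(nat \<times> nat \<times> nat \<Rightarrow> complex) \<Rightarrow> nat \<times> nat \<Rightarrow> complex" where
  "restr c m = c (0, fst m, snd m)"

definition lift :: "(nat \<times> nat \<Rightarrow> complex) \<Rightarrow> nat \<times> nat \<times> nat \<Rightarrow> complex" where
  "lift p m = (if fst m = 0 then p (snd m) else 0)"

lemma restr_lift[simp]: "restr (lift p) = p"
  by (rule ext) (simp add: restr_def lift_def)

lemma inj_emb: "inj (\<lambda>m::nat \<times> nat. (0::nat, fst m, snd m))"
  by (auto simp: inj_on_def prod_eq_iff)

lemma mpoly_restr: "mpoly_coeffs c \<Longrightarrow> mpoly_coeffs (restr c)"
proof -
  assume "mpoly_coeffs c"
  hence "finite ((\<lambda>m::nat \<times> nat. (0::nat, fst m, snd m)) -` {m. c m \<noteq> 0})"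
    unfolding mpoly_coeffs_def using inj_emb by (intro finite_vimageI) auto
  thus ?thesis unfolding mpoly_coeffs_def restr_def by (simp add: vimage_def)
qed

lemma mpoly_lift: "mpoly_coeffs p \<Longrightarrow> mpoly_coeffs (lift p)"
proof -
  assume "mpoly_coeffs p"
  hence "finite ((\<lambda>m. (0::nat, m)) ` {m. p m \<noteq> 0})" unfolding mpoly_coeffs_def by simp
  moreover have "{m. lift p m \<noteq> 0} = (\<lambda>m. (0::nat, m)) ` {m. p m \<noteq> 0}"
    by (auto simp: lift_def image_iff prod_eq_iff)
  ultimately show ?thesis unfolding mpoly_coeffs_def by simp
qed

lemma sum_restr:
  fixes f :: "nat \<times> nat \<times> nat \<Rightarrow> 'b::comm_monoid_add"
  assumes fin: "mpoly_coeffs c" and z: "\<And>m. fst m \<noteq> 0 \<Longrightarrow> f m = 0"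
  shows "(\<Sum>m\<in>{m. c m \<noteq> 0}. f m) = (\<Sum>m\<in>{m. restr c m \<noteq> 0}. f (0, fst m, snd m))"
proof -
  let ?e = "\<lambda>m::nat \<times> nat. (0::nat, fst m, snd m)"
  have "(\<Sum>m\<in>{m. c m \<noteq> 0}. f m) = (\<Sum>m\<in>{m. c m \<noteq> 0 \<and> fst m = 0}. f m)"
    by (rule sum.mono_neutral_right) (use fin[unfolded mpoly_coeffs_def] z in auto)
  also have "{m. c m \<noteq> 0 \<and> fst m = 0} = ?e ` {m. restr c m \<noteq> 0}"
  proof (rule set_eqI, rule iffI)
    fix m assume "m \<in> {m. c m \<noteq> 0 \<and> fst m = 0}"
    hence "m = ?e (snd m)" "snd m \<in> {m. restr c m \<noteq> 0}"
      by (cases m, auto simp: restr_def)+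
    thus "m \<in> ?e ` {m. restr c m \<noteq> 0}" by blast
  qed (auto simp: restr_def)
  also have "(\<Sum>m\<in>?e ` {m. restr c m \<noteq> 0}. f m) = (\<Sum>m\<in>{m. restr c m \<noteq> 0}. f (?e m))"
    by (rule sum.reindex_cong[OF inj_on_subset[OF inj_emb]]) auto
  finally show ?thesis .
qed

lemma funpow_zero: "n \<noteq> 0 \<Longrightarrow> ((\<lambda>_::'b. 0::'b::zero) ^^ n) y = 0"
  by (cases n) simp_all

lemma peval3_restr:
  assumes "mpoly_coeffs c" shows "peval3 c (0, s, r) = peval2 (restr c) (s, r)"
  unfolding peval3_def peval2_def
  by (subst sum_restr[OF assms]) (auto simp: restr_def)

lemma peval3_lift:
  assumes "mpoly_coeffs p" shows "peval3 (lift p) (a, s, r) = peval2 p (s, r)"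
proof -
  have "peval3 (lift p) (a, s, r) = peval2 (restr (lift p)) (s, r)"
    unfolding peval3_def peval2_def
    by (subst sum_restr[OF mpoly_lift[OF assms]]) (auto simp: restr_def lift_def)
  thus ?thesis by simp
qed

lemma opeval3_restr:
  assumes "mpoly_coeffs c"
  shows "opeval3 c (\<lambda>_. 0) S P = opeval2 (restr c) S (P::'a::complex_hilbert \<Rightarrow> 'a)"
  unfolding opeval3_def opeval2_def
  by (rule ext, subst sum_restr[OF assms]) (auto simp: restr_def funpow_zero)

section \<open>Geometry of the pentablock\<close>

lemma eigvec_exists:
  fixes A :: "complex^2^2"
  assumes h: "l^2 - (A$1$1 + A$2$2) * l + det A = 0"
  shows "\<exists>v::complex^2. v \<noteq> 0 \<and> (\<forall>i. (A *v v) $ i = l * v $ i)"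
proof -
  have mv: "\<And>v::complex^2. (A *v v) $ 1 = A$1$1 * v$1 + A$1$2 * v$2"
    "\<And>v::complex^2. (A *v v) $ 2 = A$2$1 * v$1 + A$2$2 * v$2"
    by (simp_all add: matrix_vector_mult_def sum_2)
  have d: "(A$1$1 - l) * (A$2$2 - l) - A$1$2 * A$2$1 = 0"
    using h by (simp add: det_2 power2_eq_square algebra_simps)
  have ok: "\<exists>v::complex^2. v \<noteq> 0 \<and> (\<forall>i. (A *v v) $ i = l * v $ i)"
    if nz: "a \<noteq> 0 \<or> b \<noteq> 0" and e1: "A$1$1 * a + A$1$2 * b = l * a"
      and e2: "A$2$1 * a + A$2$2 * b = l * b" for a b
  proof (intro exI conjI)
    show "vector [a, b] \<noteq> (0::complex^2)"
      using nz by (metis vector_2 zero_index)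
    show "\<forall>i. (A *v vector [a, b]) $ i = l * vector [a, b] $ i"
      unfolding forall_2 using e1 e2 by (simp add: mv vector_2)
  qed
  show ?thesis
  proof (cases "A$1$2 \<noteq> 0 \<or> A$1$1 - l \<noteq> 0")
    case True
    show ?thesis
      by (rule ok[of "A$1$2" "- (A$1$1 - l)"]) (use True d in \<open>auto simp: algebra_simps\<close>)
  next
    case F1: False
    show ?thesis
    proof (cases "A$2$2 - l \<noteq> 0 \<or> A$2$1 \<noteq> 0")
      case True
      show ?thesis
        by (rule ok[of "A$2$2 - l" "- A$2$1"]) (use True d in \<open>auto simp: algebra_simps\<close>)
    next
      case False
      show ?thesis
        by (rule ok[of 1 0]) (use False F1 in \<open>auto simp: algebra_simps\<close>)
    qed
  qed
qed

lemma eig_bound: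
  fixes A :: "complex^2^2"
  assumes h: "l^2 - (A$1$1 + A$2$2) * l + det A = 0" and n: "onorm (\<lambda>x. A *v x) < 1"
  shows "cmod l \<le> 1"
proof (rule ccontr)
  assume "\<not> cmod l \<le> 1"
  hence l1: "1 < cmod l" by simp
  obtain v :: "complex^2" where v: "v \<noteq> 0" "\<And>i. (A *v v) $ i = l * v $ i"
    using eigvec_exists[OF h] by blast
  have "norm v \<le> norm (A *v v)"
  proof (rule norm_le_componentwise_cart)
    fix i
    have "norm (v$i) \<le> cmod l * norm (v$i)" using l1 by (simp add: mult_le_cancel_right1)
    thus "norm (v$i) \<le> norm ((A *v v)$i)" by (simp add: v(2) norm_mult)
  qed
  also have "\<dots> \<le> onorm (\<lambda>x. A *v x) * norm v"
    using onorm[OF matrix_vector_mul_bounded_linear[of A]] by simp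
  also have "\<dots> < norm v" using n v(1) by simp
  finally show False by simp
qed

lemma penta_Gamma:
  fixes A :: "complex^2^2"
  assumes n: "onorm (\<lambda>x. A *v x) < 1"
  shows "(A$1$1 + A$2$2, det A) \<in> Gamma"
proof -
  define t where "t = A$1$1 + A$2$2"
  define r where "r = csqrt (t^2 - 4 * det A)"
  define z1 where "z1 = (t + r) / 2"
  define z2 where "z2 = (t - r) / 2"
  have r2: "r^2 = t^2 - 4 * det A" unfolding r_def by simp
  have s: "z1 + z2 = t" unfolding z1_def z2_def by (simp add: field_simps)
  have p: "z1 * z2 = det A"
  proof -
    have "z1 * z2 = (t^2 - r^2) / 4" unfolding z1_def z2_def by (simp add: field_simps power2_eq_square)
    thus ?thesis using r2 by simp
  qed
  have root: "z^2 - t * z + det A = 0" if "z = z1 \<or> z = z2" for z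
  proof -
    have "z^2 - t * z + det A = (z - z1) * (z - z2)"
      unfolding s[symmetric] p[symmetric] by (simp add: algebra_simps power2_eq_square)
    thus ?thesis using that by auto
  qed
  have "cmod z1 \<le> 1" "cmod z2 \<le> 1"
    using eig_bound[OF _ n] root unfolding t_def by auto
  note zz = this
  show ?thesis unfolding Gamma_def mem_Collect_eq
    apply (rule exI[of _ z1], rule exI[of _ z2])
    using zz s p t_def by auto
qed

lemma Gamma_compact: "compact Gamma"
proof -
  have "Gamma = (\<lambda>z. (fst z + snd z, fst z * snd z)) ` (cball (0::complex) 1 \<times> cball 0 1)"
  proof (rule set_eqI, rule iffI)
    fix w assume "w \<in> Gamma"
    then obtain z1 z2 where "w = (z1 + z2, z1 * z2)" "cmod z1 \<le> 1" "cmod z2 \<le> 1"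
      unfolding Gamma_def by blast
    thus "w \<in> (\<lambda>z. (fst z + snd z, fst z * snd z)) ` (cball (0::complex) 1 \<times> cball 0 1)"
      by (intro image_eqI[of _ _ "(z1, z2)"]) auto
  next
    fix w assume "w \<in> (\<lambda>z. (fst z + snd z, fst z * snd z)) ` (cball (0::complex) 1 \<times> cball 0 1)"
    then obtain z where "w = (fst z + snd z, fst z * snd z)" "cmod (fst z) \<le> 1" "cmod (snd z) \<le> 1"
      by auto
    thus "w \<in> Gamma" unfolding Gamma_def by blast
  qed
  moreover have "compact ((\<lambda>z. (fst z + snd z, fst z * snd z)) ` (cball (0::complex) 1 \<times> cball 0 1))"
    by (intro compact_continuous_image compact_Times compact_cball continuous_intros)
  ultimately show ?thesis by simp
qed

lemma pentablock_sub: "pentablock \<subseteq> cball 0 1 \<times> Gamma"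
proof
  fix w assume "w \<in> pentablock"
  then obtain A :: "complex^2^2" where w: "w = (A $ 2 $ 1, A $ 1 $ 1 + A $ 2 $ 2, det A)"
    and n: "onorm (\<lambda>x. A *v x) < 1" unfolding pentablock_def by blast
  define e :: "complex^2" where "e = axis 1 1"
  have "A $ 2 $ 1 = (A *v e) $ 2"
    by (simp add: matrix_vector_mult_def axis_def sum_2 e_def)
  hence "cmod (A $ 2 $ 1) \<le> norm (A *v e)" using Finite_Cartesian_Product.norm_nth_le[of "A *v e" 2] by simp
  also have "\<dots> \<le> onorm (\<lambda>x. A *v x) * norm e"
    using onorm[OF matrix_vector_mul_bounded_linear[of A]] by simp
  also have "\<dots> \<le> 1" using n by (simp add: norm_axis_1 e_def)
  finally show "w \<in> cball 0 1 \<times> Gamma" using w penta_Gamma[OF n] by simp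
qed

lemma closure_pentablock_compact: "compact (closure pentablock)"
proof -
  have "bounded (cball (0::complex) 1 \<times> Gamma)"
    by (intro bounded_Times bounded_cball compact_imp_bounded Gamma_compact)
  thus ?thesis unfolding compact_closure using pentablock_sub bounded_subset by blast
qed

lemma closure_pentablock_Gamma: "w \<in> closure pentablock \<Longrightarrow> snd w \<in> Gamma"
proof -
  assume "w \<in> closure pentablock"
  moreover have "closure pentablock \<subseteq> cball 0 1 \<times> Gamma"
    by (intro closure_minimal pentablock_sub closed_Times closed_cball compact_imp_closed Gamma_compact)
  ultimately show ?thesis by auto
qed

lemma diag_in_pentablock:
  fixes z1 z2 :: complex and t :: real
  assumes t: "0 \<le> t" "t < 1" and z: "cmod z1 \<le> 1" "cmod z2 \<le> 1"
  shows "(0, of_real t * z1 + of_real t * z2, (of_real t * z1) * (of_real t * z2)) \<in> pentablock"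
proof -
  define D :: "complex^2^2" where
    "D = (\<chi> i j. if i = j then (if i = 1 then of_real t * z1 else of_real t * z2) else 0)"
  have Dv: "(D *v x) $ i = (if i = 1 then of_real t * z1 else of_real t * z2) * x $ i" for x :: "complex^2" and i
    unfolding D_def matrix_vector_mult_def
    using exhaust_2[of i] by (auto simp: sum_2)
  have "onorm (\<lambda>x. D *v x) \<le> t"
  proof (rule onorm_le)
    fix x :: "complex^2"
    have "norm (D *v x) \<le> norm (t *\<^sub>R x)"
    proof (rule norm_le_componentwise_cart)
      fix i :: 2
      have w: "cmod (if i = 1 then of_real t * z1 else of_real t * z2) \<le> t"
        using z t by (auto simp: norm_mult intro: mult_left_le)
      have "cmod ((if i = 1 then of_real t * z1 else of_real t * z2) * x $ i)
          \<le> t * cmod (x $ i)"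
        unfolding norm_mult by (rule mult_right_mono[OF w norm_ge_zero])
      thus "norm ((D *v x) $ i) \<le> norm ((t *\<^sub>R x) $ i)"
        using t by (simp add: Dv vector_scaleR_component)
    qed
    thus "norm (D *v x) \<le> t * norm x" using t by simp
  qed
  hence n: "onorm (\<lambda>x. D *v x) < 1" using t by simp
  have "(0, of_real t * z1 + of_real t * z2, (of_real t * z1) * (of_real t * z2))
        = (D $ 2 $ 1, D $ 1 $ 1 + D $ 2 $ 2, det D)"
    unfolding D_def by (simp add: det_2)
  thus ?thesis unfolding pentablock_def using n by blast
qed

lemma Gamma_closure_pentablock:
  assumes "sp \<in> Gamma" shows "(0, sp) \<in> closure pentablock"
proof -
  obtain z1 z2 where sp: "sp = (z1 + z2, z1 * z2)" and z: "cmod z1 \<le> 1" "cmod z2 \<le> 1"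
    using assms unfolding Gamma_def by blast
  define t where "t n = 1 - inverse (real (Suc n))" for n
  have t: "0 \<le> t n" "t n < 1" for n unfolding t_def by (auto simp: field_simps)
  have tl: "t \<longlonglongrightarrow> 1"
    unfolding t_def using tendsto_diff[OF tendsto_const LIMSEQ_inverse_real_of_nat, of 1] by simp
  have ctl: "(\<lambda>n. complex_of_real (t n)) \<longlonglongrightarrow> 1"
    using tendsto_of_real[OF tl] by simp
  let ?x = "\<lambda>n. (0::complex, of_real (t n) * z1 + of_real (t n) * z2,
                 (of_real (t n) * z1) * (of_real (t n) * z2))"
  have "?x \<longlonglongrightarrow> (0, 1 * z1 + 1 * z2, (1 * z1) * (1 * z2))"
    by (intro tendsto_intros ctl)
  moreover have "\<forall>n. ?x n \<in> pentablock" using diag_in_pentablock[OF t z] by blast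
  ultimately show ?thesis unfolding closure_sequential sp by auto
qed

lemma cont_peval2: "continuous_on K (peval2 c)"
  unfolding peval2_def by (intro continuous_intros)

lemma cont_peval3: "continuous_on K (peval3 c)"
  unfolding peval3_def by (intro continuous_intros)

lemma bdd_ratio2:
  assumes "compact K" "\<forall>z\<in>K. peval2 q z \<noteq> 0"
  shows "bdd_above ((\<lambda>z. cmod (peval2 p z / peval2 q z)) ` K)"
proof -
  have "continuous_on K (\<lambda>z. cmod (peval2 p z / peval2 q z))"
    by (intro continuous_on_norm continuous_on_divide cont_peval2) (use assms in auto)
  hence "compact ((\<lambda>z. cmod (peval2 p z / peval2 q z)) ` K)"
    using assms(1) compact_continuous_image by blast
  thus ?thesis by (intro bounded_imp_bdd_above compact_imp_bounded)
qed

lemma bdd_ratio3: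
  assumes "compact K" "\<forall>z\<in>K. peval3 q z \<noteq> 0"
  shows "bdd_above ((\<lambda>z. cmod (peval3 p z / peval3 q z)) ` K)"
proof -
  have "continuous_on K (\<lambda>z. cmod (peval3 p z / peval3 q z))"
    by (intro continuous_on_norm continuous_on_divide cont_peval3) (use assms in auto)
  hence "compact ((\<lambda>z. cmod (peval3 p z / peval3 q z)) ` K)"
    using assms(1) compact_continuous_image by blast
  thus ?thesis by (intro bounded_imp_bdd_above compact_imp_bounded)
qed

lemma spec3:
  fixes S P :: "'a::complex_hilbert \<Rightarrow> 'a"
  assumes bS: "bop S" and bP: "bop P"
  shows "(l1, l2, l3) \<in> taylor_spectrum3 (\<lambda>_. 0) S P \<longleftrightarrow>
         l1 = 0 \<and> (l2, l3) \<in> taylor_spectrum2 S P"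
proof -
  let ?B = "\<lambda>x. S x - scaleC l2 x" and ?C = "\<lambda>x. P x - scaleC l3 x"
  have lB: "linear ?B" and lC: "linear ?C" using shift_linear bS bP by auto
  show ?thesis
  proof (cases "l1 = 0")
    case True
    have "(\<lambda>x. 0 - scaleC l1 x) = (\<lambda>_::'a. 0::'a)" using True by simp
    thus ?thesis unfolding taylor_spectrum3_def taylor_spectrum2_def
      using True koszul2_to_3[OF lB lC] koszul3_to_2[OF lB lC] by auto
  next
    case False
    let ?Ai = "\<lambda>x::'a. - scaleC (inverse l1) x"
    have "koszul_exact3 (\<lambda>x. 0 - scaleC l1 x) ?B ?C"
    proof (rule koszul3_invertible[OF lB lC])
      show "linear ?Ai" by (rule linear_compose_neg[OF linear_scaleC])
      fix x :: 'a
      show "0 - scaleC l1 (?Ai x) = x" "?Ai (0 - scaleC l1 x) = x"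
        using False by (simp_all add: scaleC_minus_right scaleC_scaleC scaleC_one)
      show "?B (?Ai x) = ?Ai (?B x)"
        using shift_scaleC[OF bS, of "inverse l1" x l2] linear_neg[OF lB]
        by (simp add: scaleC_minus_right) (metis minus_diff_eq)
      show "?C (?Ai x) = ?Ai (?C x)"
        using shift_scaleC[OF bP, of "inverse l1" x l3] linear_neg[OF lC]
        by (simp add: scaleC_minus_right) (metis minus_diff_eq)
    qed
    thus ?thesis unfolding taylor_spectrum3_def using False by auto
  qed
qed

lemma dir1:
  fixes S P :: "'a::complex_hilbert \<Rightarrow> 'a"
  assumes "bop S" and "bop P"
  and sp2: "spectral_set2 Gamma S P"
  shows "spectral_set3 (closure pentablock) (\<lambda>_. 0) S P"
proof -
  have G0: "(0, 0) \<in> Gamma" unfolding Gamma_def by force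
  have P0: "(0, 0, 0) \<in> closure pentablock" using Gamma_closure_pentablock[OF G0] by simp
    have sp2': "\<And>p q. mpoly_coeffs p \<Longrightarrow> mpoly_coeffs q \<Longrightarrow> (\<forall>z\<in>Gamma. peval2 q z \<noteq> 0) \<Longrightarrow>
        onorm (\<lambda>x. opeval2 p S P (inv (opeval2 q S P) x))
          \<le> (SUP z\<in>Gamma. cmod (peval2 p z / peval2 q z))"
      by (rule sp2[unfolded spectral_set2_def, THEN conjunct2, rule_format]) (intro conjI)
    show "spectral_set3 (closure pentablock) (\<lambda>_. 0) S P"
      unfolding spectral_set3_def
    proof (intro conjI allI impI subsetI)
      fix w assume "w \<in> taylor_spectrum3 (\<lambda>_. 0) S P"
      moreover obtain l1 l2 l3 where w: "w = (l1, l2, l3)" by (cases w)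
      ultimately have "l1 = 0" "(l2, l3) \<in> taylor_spectrum2 S P"
        using spec3[OF assms(1,2)] by auto
      hence "(l2, l3) \<in> Gamma" using sp2[unfolded spectral_set2_def, THEN conjunct1] by blast
      thus "w \<in> closure pentablock" using Gamma_closure_pentablock w \<open>l1 = 0\<close> by auto
    next
      fix p q :: "nat \<times> nat \<times> nat \<Rightarrow> complex"
      assume h: "mpoly_coeffs p \<and> mpoly_coeffs q \<and> (\<forall>z\<in>closure pentablock. peval3 q z \<noteq> 0)"
      hence mp: "mpoly_coeffs p" and mq: "mpoly_coeffs q"
        and nz: "\<forall>z\<in>closure pentablock. peval3 q z \<noteq> 0" by auto
      have ev: "peval3 c (0, z) = peval2 (restr c) z" if "mpoly_coeffs c" for c z
        using peval3_restr[OF that, of "fst z" "snd z"] by simp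
      have nz2: "\<forall>z\<in>Gamma. peval2 (restr q) z \<noteq> 0"
      proof
        fix z assume "z \<in> Gamma"
        hence "(0, z) \<in> closure pentablock" by (rule Gamma_closure_pentablock)
        hence "peval3 q (0, z) \<noteq> 0" using nz by blast
        thus "peval2 (restr q) z \<noteq> 0" using ev[OF mq] by simp
      qed
      have "onorm (\<lambda>x. opeval2 (restr p) S P (inv (opeval2 (restr q) S P) x))
            \<le> (SUP z\<in>Gamma. cmod (peval2 (restr p) z / peval2 (restr q) z))"
        by (rule sp2'[OF mpoly_restr[OF mp] mpoly_restr[OF mq] nz2])
      also have "\<dots> \<le> (SUP z\<in>closure pentablock. cmod (peval3 p z / peval3 q z))"
      proof (rule cSUP_mono)
        show "Gamma \<noteq> {}"
        proof
          assume "Gamma = {}" thus False using G0 by simp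
        qed
        show "bdd_above ((\<lambda>z. cmod (peval3 p z / peval3 q z)) ` closure pentablock)"
          by (rule bdd_ratio3[OF closure_pentablock_compact nz])
        fix z assume z: "z \<in> Gamma"
        show "\<exists>m\<in>closure pentablock. cmod (peval2 (restr p) z / peval2 (restr q) z)
                 \<le> cmod (peval3 p m / peval3 q m)"
        proof (rule bexI[of _ "(0, z)"])
          show "(0, z) \<in> closure pentablock" using z by (rule Gamma_closure_pentablock)
        qed (simp only: ev[OF mp] ev[OF mq] order_refl)
      qed
      finally show "onorm (\<lambda>x. opeval3 p (\<lambda>_. 0) S P (inv (opeval3 q (\<lambda>_. 0) S P) x))
            \<le> (SUP z\<in>closure pentablock. cmod (peval3 p z / peval3 q z))"
        unfolding opeval3_restr[OF mp] opeval3_restr[OF mq] .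
    qed

qed

lemma dir2:
  fixes S P :: "'a::complex_hilbert \<Rightarrow> 'a"
  assumes "bop S" and "bop P"
  and sp3: "spectral_set3 (closure pentablock) (\<lambda>_. 0) S P"
  shows "spectral_set2 Gamma S P"
proof -
  have G0: "(0, 0) \<in> Gamma" unfolding Gamma_def by force
  have P0: "(0, 0, 0) \<in> closure pentablock" using Gamma_closure_pentablock[OF G0] by simp
    have sp3': "\<And>p q. mpoly_coeffs p \<Longrightarrow> mpoly_coeffs q \<Longrightarrow> (\<forall>z\<in>closure pentablock. peval3 q z \<noteq> 0) \<Longrightarrow>
        onorm (\<lambda>x. opeval3 p (\<lambda>_. 0) S P (inv (opeval3 q (\<lambda>_. 0) S P) x))
          \<le> (SUP z\<in>closure pentablock. cmod (peval3 p z / peval3 q z))"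
      by (rule sp3[unfolded spectral_set3_def, THEN conjunct2, rule_format]) (intro conjI)
    show "spectral_set2 Gamma S P"
      unfolding spectral_set2_def
    proof (intro conjI allI impI subsetI)
      fix w assume "w \<in> taylor_spectrum2 S P"
      moreover obtain l2 l3 where w: "w = (l2, l3)" by (cases w)
      ultimately have "(0, l2, l3) \<in> taylor_spectrum3 (\<lambda>_. 0) S P"
        using spec3[OF assms(1,2), of 0 l2 l3] by simp
      hence "(0, l2, l3) \<in> closure pentablock" using sp3[unfolded spectral_set3_def, THEN conjunct1] by blast
      hence "snd (0::complex, l2, l3) \<in> Gamma" by (rule closure_pentablock_Gamma)
      thus "w \<in> Gamma" using w by simp
    next
      fix p q :: "nat \<times> nat \<Rightarrow> complex"
      assume h: "mpoly_coeffs p \<and> mpoly_coeffs q \<and> (\<forall>z\<in>Gamma. peval2 q z \<noteq> 0)"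
      hence mp: "mpoly_coeffs p" and mq: "mpoly_coeffs q"
        and nz: "\<forall>z\<in>Gamma. peval2 q z \<noteq> 0" by auto
      have ev: "peval3 (lift c) w = peval2 c (snd w)" if "mpoly_coeffs c" for c w
        using peval3_lift[OF that, of "fst w" "fst (snd w)" "snd (snd w)"] by simp
      have nz3: "\<forall>w\<in>closure pentablock. peval3 (lift q) w \<noteq> 0"
      proof
        fix w assume "w \<in> closure pentablock"
        hence "snd w \<in> Gamma" by (rule closure_pentablock_Gamma)
        thus "peval3 (lift q) w \<noteq> 0" using nz ev[OF mq] by simp
      qed
      have "onorm (\<lambda>x. opeval3 (lift p) (\<lambda>_. 0) S P (inv (opeval3 (lift q) (\<lambda>_. 0) S P) x))
            \<le> (SUP w\<in>closure pentablock. cmod (peval3 (lift p) w / peval3 (lift q) w))"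
        by (rule sp3'[OF mpoly_lift[OF mp] mpoly_lift[OF mq] nz3])
      also have "\<dots> \<le> (SUP z\<in>Gamma. cmod (peval2 p z / peval2 q z))"
      proof (rule cSUP_mono)
        show "closure pentablock \<noteq> {}"
        proof
          assume "closure pentablock = {}" thus False using P0 by simp
        qed
        show "bdd_above ((\<lambda>z. cmod (peval2 p z / peval2 q z)) ` Gamma)"
          by (rule bdd_ratio2[OF Gamma_compact nz])
        fix w assume w: "w \<in> closure pentablock"
        show "\<exists>m\<in>Gamma. cmod (peval3 (lift p) w / peval3 (lift q) w)
                 \<le> cmod (peval2 p m / peval2 q m)"
        proof (rule bexI[of _ "snd w"])
          show "snd w \<in> Gamma" using w by (rule closure_pentablock_Gamma)
        qed (simp only: ev[OF mp] ev[OF mq] order_refl)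
      qed
      finally have fin: "onorm (\<lambda>x. opeval3 (lift p) (\<lambda>_. 0) S P (inv (opeval3 (lift q) (\<lambda>_. 0) S P) x))
            \<le> (SUP z\<in>Gamma. cmod (peval2 p z / peval2 q z))" .
      have e1: "opeval3 (lift p) (\<lambda>_. 0) S P = opeval2 p S P"
        using opeval3_restr[OF mpoly_lift[OF mp], of S P] by (simp only: restr_lift)
      have e2: "opeval3 (lift q) (\<lambda>_. 0) S P = opeval2 q S P"
        using opeval3_restr[OF mpoly_lift[OF mq], of S P] by (simp only: restr_lift)
      show "onorm (\<lambda>x. opeval2 p S P (inv (opeval2 q S P) x))
            \<le> (SUP z\<in>Gamma. cmod (peval2 p z / peval2 q z))"
        using fin unfolding e1 e2 .
    qed
  
qed

theorem mainTheorem12: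
  fixes S P :: "'a::complex_hilbert \<Rightarrow> 'a"
  assumes "bop S" and "bop P" and "S \<circ> P = P \<circ> S"
  shows "gamma_contraction S P \<longleftrightarrow> penta_contraction (\<lambda>_. 0) S P"
proof -
  have b0: "bop (\<lambda>_::'a. 0::'a)" unfolding bop_def by simp
  have c1: "(\<lambda>_::'a. 0::'a) \<circ> S = S \<circ> (\<lambda>_. 0)" "(\<lambda>_::'a. 0::'a) \<circ> P = P \<circ> (\<lambda>_. 0)"
    using linear_0[OF bop_linear[OF assms(1)]] linear_0[OF bop_linear[OF assms(2)]]
    by (auto simp: comp_def)
  have spec_eq: "spectral_set2 Gamma S P \<longleftrightarrow> spectral_set3 (closure pentablock) (\<lambda>_. 0) S P"
    using dir1[OF assms(1,2)] dir2[OF assms(1,2)] by blast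
  show ?thesis
    unfolding gamma_contraction_def penta_contraction_def
    by (simp only: assms b0 c1 spec_eq simp_thms)
qed

end
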